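(* Let $\Delta x>0$, consider the homogeneous grid $x_j=x_1+(j-1)\Delta x$, let $M_-,M_+\in\mathbb{Z}$ with $M:=M_-+M_+\ge0$, and consider the stencil $\{i-M_-,\dots,i+M_+\}$ of $M+1$ grid points. Let $f$ be a real function defined at the points $x_{i+\ell}$, $f_{i+\ell}:=f(x_{i+\ell})$, let $p_f(x)=\sum_{m=0}^{M}c_{f,m}\left(\frac{x-x_i}{\Delta x}\right)^m$ be the polynomial of degree $\le M$ interpolating $f$ at $x_{i-M_-},\dots,x_{i+M_+}$, and let $p_h(x)=\sum_{m=0}^{M}c_{h,m}\left(\frac{x-x_i}{\Delta x}\right)^m$ be the polynomial of degree $\le M$ satisfying $p_f(x)=\frac{1}{\Delta x}\int_{x-\frac12\Delta x}^{x+\frac12\Delta x}p_h(\zeta)\,d\zeta$ for all $x$. Then, with $\xi:=(x-x_i)/\Delta x$, $$p_h(x_i+\xi\Delta x)=\sum_{\ell=-M_-}^{M_+}\alpha_{h,M_-,M_+,\ell}(\xi)f_{i+\ell},\qquad p_f(x_i+\xi\Delta x)=\sum_{\ell=-M_-}^{M_+}\alpha_{f,M_-,M_+,\ell}(\xi)f_{i+\ell},$$ where $\alpha_{h,M_-,M_+,\ell}$ and $\alpha_{f,M_-,M_+,\ell}$ are polynomials of degree $M$ in $\xi$, with coefficients depending only on $(M_-,M_+,\ell)$, given by $$\alpha_{h,M_-,M_+,\ell}(\xi)=\sum_{m=0}^{M}\left(\sum_{k=0}^{\lfloor (M-m)/2\rfloor}\frac{\tau_{2k}(m+2k)!}{m!}(V_{M_-,M_+}^{-1})_{m+2k+1,\ell+M_-+1}\right)\xi^m,$$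 $$\alpha_{f,M_-,M_+,\ell}(\xi)=\sum_{m=0}^{M}(V_{M_-,M_+}^{-1})_{m+1,\ell+M_-+1}\,\xi^m.$$
   Context: $V_{M_-,M_+}\in\mathbb{R}^{(M+1)\times(M+1)}$ is the (invertible) Vandermonde matrix with entries $(V_{M_-,M_+})_{ij}=(i-1-M_-)^{j-1}$ (with $0^0=1$). The numbers $\tau_{2k}$ are defined by $\tau_0=1$ and $\tau_{2k}=\sum_{s=0}^{k-1}\frac{-\tau_{2s}}{2^{2k-2s}(2k-2s+1)!}$ for $k>0$. *)

theory Defs
  imports "HOL-Analysis.Analysis" "HOL-Computational_Algebra.Polynomial"
begin

text \<open>tau k denotes the paper's tau_{2k}.\<close>
fun tau :: "nat \<Rightarrow> real" where
  "tau k = (if k = 0 then 1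
            else (\<Sum>s<k. - tau s / ((2::real) ^ (2 * (k - s)) * fact (2 * (k - s) + 1))))"

definition grid :: "real \<Rightarrow> real \<Rightarrow> int \<Rightarrow> real" where
  "grid x1 dx j = x1 + (real_of_int j - 1) * dx"

text \<open>Vandermonde matrix V_{Mm,Mp}, 0-based indices r, c in {0..M}:
  entry (r,c) is (r - Mm)^c  (paper's (i,j) = (r+1,c+1)); 0^0 = 1.\<close>
definition vand :: "int \<Rightarrow> int \<Rightarrow> nat \<Rightarrow> nat \<Rightarrow> real" where
  "vand Mm Mp r c = (real_of_int (int r - Mm)) ^ c"

definition vand_inv :: "int \<Rightarrow> int \<Rightarrow> nat \<Rightarrow> nat \<Rightarrow> real" where
  "vand_inv Mm Mp = (THE W. (\<forall>r c. (nat (Mm + Mp) < r \<or> nat (Mm + Mp) < c) \<longrightarrow> W r c = 0)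
       \<and> (\<forall>r\<le>nat (Mm + Mp). \<forall>c\<le>nat (Mm + Mp).
            (\<Sum>k\<le>nat (Mm + Mp). vand Mm Mp r k * W k c) = (if r = c then 1 else 0))
       \<and> (\<forall>r\<le>nat (Mm + Mp). \<forall>c\<le>nat (Mm + Mp).
            (\<Sum>k\<le>nat (Mm + Mp). W r k * vand Mm Mp k c) = (if r = c then 1 else 0)))"

definition alpha_f :: "int \<Rightarrow> int \<Rightarrow> int \<Rightarrow> real \<Rightarrow> real" where
  "alpha_f Mm Mp l \<xi> = (\<Sum>m\<le>nat (Mm + Mp). vand_inv Mm Mp m (nat (l + Mm)) * \<xi> ^ m)"

definition alpha_h :: "int \<Rightarrow> int \<Rightarrow> int \<Rightarrow> real \<Rightarrow> real" where
  "alpha_h Mm Mp l \<xi> = (\<Sum>m\<le>nat (Mm + Mp).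
      (\<Sum>k\<le>(nat (Mm + Mp) - m) div 2.
         tau k * fact (m + 2*k) / fact m * vand_inv Mm Mp (m + 2*k) (nat (l + Mm))) * \<xi> ^ m)"

end

theory Submission
  imports Defs
begin

lemma hp_zero: "degree p < n \<Longrightarrow> (pderiv ^^ n) p = (0::real poly)"
  by (rule poly_eqI) (simp add: coeff_higher_pderiv coeff_eq_0)

lemma fact_poch: "fact (j + n) = (fact j :: real) * pochhammer (of_nat (Suc j)) n"
proof -
  have "pochhammer (1::real) (j + n) = pochhammer 1 j * pochhammer (1 + of_nat j) n"
    by (rule pochhammer_product')
  then show ?thesis by (simp add: pochhammer_fact add.commute)
qed

lemma poch_choose: "n \<le> d \<Longrightarrow> pochhammer (of_nat (Suc (d - n))) n / fact n = (of_nat (d choose n) :: real)"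
  using fact_poch[of "d - n" n] by (simp add: binomial_fact field_simps)

lemma poly_sum_N: "degree (p::real poly) < N \<Longrightarrow> poly p x = (\<Sum>i<N. coeff p i * x ^ i)"
proof -
  assume a: "degree p < N"
  have "poly p x = (\<Sum>i\<le>degree p. coeff p i * x ^ i)" by (rule poly_altdef)
  also have "\<dots> = (\<Sum>i<N. coeff p i * x ^ i)"
    by (rule sum.mono_neutral_left) (use a in \<open>auto simp: coeff_eq_0\<close>)
  finally show ?thesis .
qed

lemma taylor:
  fixes P :: "real poly"
  assumes "degree P < N"
  shows "poly P (x + t) = (\<Sum>n<N. poly ((pderiv ^^ n) P) x * t ^ n / fact n)"
proof -
  define g where "g n j = pochhammer (of_nat (Suc j)) n * coeff P (j + n) * x ^ j * t ^ n / fact n" for n j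
  have "(\<Sum>n<N. poly ((pderiv ^^ n) P) x * t ^ n / fact n) = (\<Sum>n<N. \<Sum>j<N. g n j)"
  proof (rule sum.cong[OF refl])
    fix n assume "n \<in> {..<N}"
    have d: "degree ((pderiv ^^ n) P) < N" using assms by (simp add: degree_higher_pderiv)
    show "poly ((pderiv ^^ n) P) x * t ^ n / fact n = (\<Sum>j<N. g n j)"
      unfolding poly_sum_N[OF d] g_def by (simp add: sum_distrib_right sum_divide_distrib coeff_higher_pderiv)
  qed
  also have "\<dots> = (\<Sum>(n,j)\<in>{..<N}\<times>{..<N}. g n j)" by (simp add: sum.cartesian_product)
  also have "\<dots> = (\<Sum>(n,j)\<in>{(n,j). n + j < N}. g n j)"
    by (rule sum.mono_neutral_right) (use assms in \<open>auto simp: g_def dest!: le_degree\<close>)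
  also have "\<dots> = (\<Sum>d<N. \<Sum>n\<le>d. g n (d - n))" by (rule sum.triangle_reindex)
  also have "\<dots> = (\<Sum>d<N. coeff P d * (x + t) ^ d)"
  proof (rule sum.cong[OF refl])
    fix d
    have "(x + t) ^ d = (\<Sum>n\<le>d. of_nat (d choose n) * t ^ n * x ^ (d - n))"
      using binomial_ring[of t x d] by (simp add: add.commute)
    then show "(\<Sum>n\<le>d. g n (d - n)) = coeff P d * (x + t) ^ d"
      by (simp add: sum_distrib_left g_def poch_choose[symmetric] field_simps)
  qed
  also have "\<dots> = poly P (x + t)" by (rule poly_sum_N[symmetric]) (rule assms)
  finally show ?thesis ..
qed

lemma antideriv: "\<exists>P::real poly. pderiv P = p \<and> degree P \<le> degree p + 1"
proof -
  define P where "P = (\<Sum>n\<le>degree p. monom (coeff p n / of_nat (Suc n)) (Suc n))"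
  have "pderiv P = (\<Sum>n\<le>degree p. pderiv (monom (coeff p n / of_nat (Suc n)) (Suc n)))"
    unfolding P_def using higher_pderiv_sum[of 1] by simp
  also have "\<dots> = (\<Sum>n\<le>degree p. monom (coeff p n) n)"
    by (simp add: pderiv_monom del: of_nat_Suc)
  also have "\<dots> = p" by (rule poly_as_sum_of_monoms)
  finally have "pderiv P = p" .
  moreover have "degree P \<le> degree p + 1" unfolding P_def
    by (rule degree_sum_le) (auto intro: order.trans[OF degree_monom_le])
  ultimately show ?thesis by blast
qed

lemma ftc_poly:
  assumes "pderiv P = (p::real poly)" "a \<le> b"
  shows "integral {a..b} (poly p) = poly P b - poly P a"
proof -
  have "(poly p has_integral (poly P b - poly P a)) {a..b}"
  proof (rule fundamental_theorem_of_calculus[OF assms(2)])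
    fix x assume "x \<in> {a..b}"
    have "(poly P has_real_derivative poly p x) (at x)"
      using poly_DERIV[of P x] assms(1) by simp
    then show "(poly P has_vector_derivative poly p x) (at x within {a..b})"
      by (simp add: has_real_derivative_iff_has_vector_derivative[symmetric] has_field_derivative_at_within)
  qed
  then show ?thesis by (rule integral_unique)
qed

definition bb :: "nat \<Rightarrow> real" where
  "bb m = 1 / ((2::real) ^ (2 * m) * fact (2 * m + 1))"

lemma average:
  fixes P :: "real poly"
  assumes "h > 0" "pderiv P = ph" "degree P < 2 * K"
  shows "(1/h) * (poly P (x + h/2) - poly P (x - h/2))
     = (\<Sum>j<K. bb j * h ^ (2*j) * poly ((pderiv ^^ (2*j)) ph) x)"
proof -
  have e1: "poly P (x + h/2) = (\<Sum>n<2*K. poly ((pderiv ^^ n) P) x * (h/2) ^ n / fact n)"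
    by (rule taylor[OF assms(3)])
  have e2: "poly P (x - h/2) = (\<Sum>n<2*K. poly ((pderiv ^^ n) P) x * (-h/2) ^ n / fact n)"
    using taylor[OF assms(3), of x "-h/2"] by simp
  have "poly P (x + h/2) - poly P (x - h/2)
     = (\<Sum>n<2*K. if even n then 0 else 2 * poly ((pderiv ^^ n) P) x * (h/2) ^ n / fact n)"
    unfolding e1 e2 sum_subtractf[symmetric]
    by (rule sum.cong[OF refl]) (auto simp: power_minus_odd field_simps)
  also have "\<dots> = (\<Sum>j<K. 2 * poly ((pderiv ^^ (2*j+1)) P) x * (h/2) ^ (2*j+1) / fact (2*j+1))"
    by (subst sum_split_even_odd) simp
  finally have "(1/h) * (poly P (x + h/2) - poly P (x - h/2)) =
     (\<Sum>j<K. (1/h) * (2 * poly ((pderiv ^^ (2*j+1)) P) x * (h/2) ^ (2*j+1) / fact (2*j+1)))"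
    by (simp add: sum_distrib_left)
  also have "\<dots> = (\<Sum>j<K. bb j * h ^ (2*j) * poly ((pderiv ^^ (2*j)) ph) x)"
  proof (rule sum.cong[OF refl])
    fix j
    have "(pderiv ^^ (2*j+1)) P = (pderiv ^^ (2*j)) ph"
      using assms(2) by (simp add: funpow_Suc_right del: funpow.simps)
    then show "(1/h) * (2 * poly ((pderiv ^^ (2*j+1)) P) x * (h/2) ^ (2*j+1) / fact (2*j+1)) =
       bb j * h ^ (2*j) * poly ((pderiv ^^ (2*j)) ph) x"
      using assms(1) by (simp add: bb_def power_divide field_simps)
  qed
  finally show ?thesis .
qed

declare tau.simps [simp del]

lemma tau_conv: "(\<Sum>k\<le>n. tau k * bb (n - k)) = (if n = 0 then 1 else 0)"
proof (cases n)
  case 0 then show ?thesis by (simp add: tau.simps bb_def)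
next
  case (Suc m)
  have t: "tau n = (\<Sum>s<n. - tau s * bb (n - s))"
    using Suc by (subst tau.simps) (simp add: bb_def)
  have "(\<Sum>k\<le>n. tau k * bb (n - k)) = (\<Sum>k<n. tau k * bb (n - k)) + tau n * bb 0"
    by (simp add: lessThan_Suc_atMost[symmetric])
  also have "\<dots> = 0" unfolding t by (simp add: bb_def sum_negf)
  finally show ?thesis using Suc by simp
qed

lemma inversion:
  fixes pf ph :: "real poly"
  assumes pf_eq: "pf = (\<Sum>j<K. smult (bb j * h ^ (2*j)) ((pderiv ^^ (2*j)) ph))"
    and deg: "degree ph < 2 * K"
  shows "poly ph y = (\<Sum>k<K. tau k * h ^ (2*k) * poly ((pderiv ^^ (2*k)) pf) y)"
proof -
  define G where "G n = h ^ (2*n) * poly ((pderiv ^^ (2*n)) ph) y" for n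
  have G0: "G n = 0" if "K \<le> n" for n
    using that deg by (simp add: G_def hp_zero)
  have D: "poly ((pderiv ^^ (2*k)) pf) y = (\<Sum>j<K. bb j * h ^ (2*j) * poly ((pderiv ^^ (2*(k+j))) ph) y)" for k
  proof -
    have "(pderiv ^^ (2*k)) pf = (\<Sum>j<K. smult (bb j * h ^ (2*j)) ((pderiv ^^ (2*k + 2*j)) ph))"
      unfolding pf_eq higher_pderiv_sum higher_pderiv_smult funpow_add by simp
    then show ?thesis by (simp add: poly_sum algebra_simps)
  qed
  have "(\<Sum>k<K. tau k * h ^ (2*k) * poly ((pderiv ^^ (2*k)) pf) y)
      = (\<Sum>k<K. \<Sum>j<K. tau k * bb j * G (k + j))"
    unfolding D by (simp add: sum_distrib_left G_def power_add algebra_simps)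
  also have "\<dots> = (\<Sum>(k,j)\<in>{..<K}\<times>{..<K}. tau k * bb j * G (k + j))"
    by (simp add: sum.cartesian_product)
  also have "\<dots> = (\<Sum>(k,j)\<in>{(k,j). k + j < K}. tau k * bb j * G (k + j))"
    by (rule sum.mono_neutral_right) (auto, metis G0 not_less)
  also have "\<dots> = (\<Sum>n<K. \<Sum>k\<le>n. tau k * bb (n - k) * G (k + (n - k)))"
    by (rule sum.triangle_reindex)
  also have "\<dots> = (\<Sum>n<K. \<Sum>k\<le>n. tau k * bb (n - k) * G n)"
    by (auto intro!: sum.cong)
  also have "\<dots> = (\<Sum>n<K. (if n = 0 then 1 else 0) * G n)"
    by (simp add: sum_distrib_right[symmetric] tau_conv del: mult_eq_0_iff)
  also have "\<dots> = G 0"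
    using deg by (simp add: sum.delta' if_distrib[of "\<lambda>c. c * _"] cong: if_cong)
  also have "\<dots> = poly ph y" by (simp add: G_def)
  finally show ?thesis ..
qed

lemma rescale:
  "(pderiv ^^ n) (pcompose p [:a, h:]) = smult (h ^ n) (pcompose ((pderiv ^^ n) p) [:a, h::real:])"
  by (induction n) (simp_all add: pderiv_pcompose pderiv_smult pderiv_pCons algebra_simps)

lemma interp_unique:
  fixes Q :: "real poly"
  assumes "degree Q \<le> M" "inj_on y {..M}" "\<And>r. r \<le> M \<Longrightarrow> poly Q (y r) = 0"
  shows "Q = 0"
proof (rule ccontr)
  assume Q: "Q \<noteq> 0"
  have "y ` {..M} \<subseteq> {x. poly Q x = 0}" using assms(3) by auto
  then have "card (y ` {..M}) \<le> card {x. poly Q x = 0}"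
    by (rule card_mono[OF poly_roots_finite[OF Q]])
  also have "\<dots> \<le> degree Q" by (rule card_poly_roots_bound[OF Q])
  finally show False using assms(1) card_image[OF assms(2)] by simp
qed

lemma lin_deg: "degree (smult a [:b, 1:]) \<le> (1::nat)"
  by (rule order.trans[OF degree_smult_le]) simp

lemma vand_exists:
  fixes Mm Mp :: int
  defines "M \<equiv> nat (Mm + Mp)"
  shows "\<exists>W. (\<forall>r c. (M < r \<or> M < c) \<longrightarrow> W r c = 0)
       \<and> (\<forall>r\<le>M. \<forall>c\<le>M. (\<Sum>k\<le>M. vand Mm Mp r k * W k c) = (if r = c then 1 else 0))
       \<and> (\<forall>r\<le>M. \<forall>c\<le>M. (\<Sum>k\<le>M. W r k * vand Mm Mp k c) = (if r = c then 1 else 0))"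
proof -
  define y where "y r = real_of_int (int r - Mm)" for r :: nat
  have yinj: "inj_on y {..M}" by (auto simp: y_def inj_on_def)
  define L where "L c = (\<Prod>j\<in>{..M}-{c}. smult (1 / (y c - y j)) [:- y j, 1:])" for c
  have Lval: "poly (L c) (y r) = (if r = c then 1 else 0)" if "r \<le> M" "c \<le> M" for r c
  proof (cases "r = c")
    case True
    have "poly (L c) (y r) = (\<Prod>j\<in>{..M}-{c}. 1)"
      unfolding L_def poly_prod using True
    proof (intro prod.cong refl)
      fix j assume "j \<in> {..M}-{c}"
      then have "y c - y j \<noteq> 0" by (auto simp: y_def)
      then show "poly (smult (1 / (y c - y j)) [:- y j, 1:]) (y r) = 1"
        using True by (simp only: poly_smult poly_pCons poly_0) simp
    qed
    then show ?thesis using True by simp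
  next
    case False
    have "poly (L c) (y r) = 0"
      unfolding L_def poly_prod
      by (rule prod_zero) (use False that in auto)
    then show ?thesis using False by simp
  qed
  have Ldeg: "degree (L c) \<le> M" if "c \<le> M" for c
  proof -
    have "degree (L c) \<le> (\<Sum>j\<in>{..M}-{c}. (1::nat))"
      unfolding L_def
      by (rule order.trans[OF degree_prod_sum_le[of "{..M}-{c}"]]) (simp, rule sum_mono, simp only: o_def, rule lin_deg)
    also have "\<dots> = M" using that by simp
    finally show ?thesis .
  qed
  define W where "W k c = (if k \<le> M \<and> c \<le> M then coeff (L c) k else 0)" for k c
  have vy: "vand Mm Mp r c = y r ^ c" for r c by (simp add: vand_def y_def)
  have R: "(\<Sum>k\<le>M. vand Mm Mp r k * W k c) = (if r = c then 1 else 0)" if "r \<le> M" "c \<le> M" for r c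
  proof -
    have "(\<Sum>k\<le>M. vand Mm Mp r k * W k c) = (\<Sum>k<Suc M. coeff (L c) k * y r ^ k)"
      using that by (auto simp: W_def vy lessThan_Suc_atMost intro!: sum.cong)
    also have "\<dots> = poly (L c) (y r)"
      by (rule poly_sum_N[symmetric]) (use Ldeg[OF that(2)] in simp)
    finally show ?thesis using Lval[OF that] by simp
  qed
  have Lf: "(\<Sum>k\<le>M. W r k * vand Mm Mp k c) = (if r = c then 1 else 0)" if "r \<le> M" "c \<le> M" for r c
  proof -
    define S where "S = (\<Sum>k\<le>M. smult (y k ^ c) (L k))"
    have "S - monom 1 c = 0"
    proof (rule interp_unique[OF _ yinj])
      show "degree (S - monom 1 c) \<le> M"
        unfolding S_def using that Ldeg
        by (intro degree_diff_le degree_sum_le) (auto simp: degree_monom_eq intro: order.trans[OF degree_smult_le])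
      fix s assume s: "s \<le> M"
      have "poly S (y s) = (\<Sum>k\<le>M. y k ^ c * (if s = k then 1 else 0))"
        unfolding S_def poly_sum poly_smult using Lval s by (intro sum.cong refl) auto
      also have "\<dots> = y s ^ c" using s by (simp add: if_distrib cong: if_cong)
      finally show "poly (S - monom 1 c) (y s) = 0" by (simp add: poly_monom)
    qed
    then have "S = monom 1 c" by simp
    have "(\<Sum>k\<le>M. W r k * vand Mm Mp k c) = coeff S r"
      unfolding S_def coeff_sum using that by (auto simp: W_def vy intro!: sum.cong)
    then show ?thesis using \<open>S = monom 1 c\<close> by (simp add: coeff_monom)
  qed
  have Z: "\<forall>r c. (M < r \<or> M < c) \<longrightarrow> W r c = 0" by (auto simp: W_def)
  show ?thesis using Z R Lf by blast
qed

lemma vand_inv_left: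
  fixes Mm Mp :: int
  assumes "r \<le> nat (Mm + Mp)" "c \<le> nat (Mm + Mp)"
  shows "(\<Sum>k\<le>nat (Mm + Mp). vand_inv Mm Mp r k * vand Mm Mp k c) = (if r = c then 1 else 0)"
proof -
  define M where "M = nat (Mm + Mp)"
  define Q where "Q W \<longleftrightarrow> (\<forall>r c. (M < r \<or> M < c) \<longrightarrow> W r c = 0)
       \<and> (\<forall>r\<le>M. \<forall>c\<le>M. (\<Sum>k\<le>M. vand Mm Mp r k * W k c) = (if r = c then 1 else 0))
       \<and> (\<forall>r\<le>M. \<forall>c\<le>M. (\<Sum>k\<le>M. W r k * vand Mm Mp k c) = (if r = c then (1::real) else 0))" for W
  have ex: "\<exists>W. Q W" unfolding Q_def M_def by (rule vand_exists)
  have un: "W1 = W2" if "Q W1" "Q W2" for W1 W2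
  proof (intro ext)
    fix r c
    show "W1 r c = W2 r c"
    proof (cases "r \<le> M \<and> c \<le> M")
      case True
      have "W1 r c = (\<Sum>k\<le>M. W1 r k * (if k = c then 1 else 0))"
        using True by (simp add: if_distrib cong: if_cong)
      also have "\<dots> = (\<Sum>k\<le>M. W1 r k * (\<Sum>j\<le>M. vand Mm Mp k j * W2 j c))"
        using that(2) True unfolding Q_def by (intro sum.cong refl) auto
      also have "\<dots> = (\<Sum>j\<le>M. (\<Sum>k\<le>M. W1 r k * vand Mm Mp k j) * W2 j c)"
        unfolding sum_distrib_left sum_distrib_right mult.assoc by (rule sum.swap)
      also have "\<dots> = (\<Sum>j\<le>M. (if r = j then 1 else 0) * W2 j c)"
        using that(1) True unfolding Q_def by (intro sum.cong refl) auto
      also have "\<dots> = (\<Sum>j\<le>M. if r = j then W2 j c else 0)" by (intro sum.cong) auto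
      also have "\<dots> = W2 r c" using True by simp
      finally show ?thesis .
    next
      case False
      then show ?thesis using that unfolding Q_def by auto
    qed
  qed
  have "Q (vand_inv Mm Mp)"
    unfolding vand_inv_def M_def[symmetric] Q_def[symmetric]
    by (rule theI'[of Q]) (use ex un in blast)
  then show ?thesis using assms unfolding Q_def M_def by blast
qed



lemma reidx:
  fixes Mm Mp :: int
  assumes "Mm + Mp \<ge> 0"
  shows "(\<Sum>l = -Mm..Mp. G l) = (\<Sum>r\<le>nat (Mm + Mp). G (int r - Mm))"
  by (rule sum.reindex_bij_witness[where i="\<lambda>r. int r - Mm" and j="\<lambda>l. nat (l + Mm)"])
     (use assms in auto)

theorem proposition1:
  fixes dx x1 :: real and i Mm Mp :: int and f :: "real \<Rightarrow> real"
    and pf ph :: "real poly"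
  assumes "dx > 0"
    and "Mm + Mp \<ge> 0"
    and "degree pf \<le> nat (Mm + Mp)"
    and "\<And>l. -Mm \<le> l \<Longrightarrow> l \<le> Mp \<Longrightarrow> poly pf (grid x1 dx (i + l)) = f (grid x1 dx (i + l))"
    and "degree ph \<le> nat (Mm + Mp)"
    and "\<And>x. poly pf x = (1 / dx) * integral {x - dx / 2 .. x + dx / 2} (poly ph)"
  shows "\<forall>\<xi>. poly ph (grid x1 dx i + \<xi> * dx)
              = (\<Sum>l = -Mm..Mp. alpha_h Mm Mp l \<xi> * f (grid x1 dx (i + l)))
          \<and> poly pf (grid x1 dx i + \<xi> * dx)
              = (\<Sum>l = -Mm..Mp. alpha_f Mm Mp l \<xi> * f (grid x1 dx (i + l)))"
proof
  fix \<xi> :: real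
  define M where "M = nat (Mm + Mp)"
  define c0 where "c0 = grid x1 dx i"
  define qf where "qf = pcompose pf [:c0, dx:]"
  define a where "a j = coeff qf j" for j
  define W where "W = vand_inv Mm Mp"
  define F where "F r = f (grid x1 dx (i + (int r - Mm)))" for r :: nat
  have grid: "grid x1 dx (i + l) = c0 + real_of_int l * dx" for l
    by (simp add: grid_def c0_def algebra_simps)
  have q1: "poly qf y = poly pf (c0 + y * dx)" for y
    by (simp add: qf_def poly_pcompose)
  have degq: "degree qf \<le> M"
    using degree_pcompose_le[of pf "[:c0, dx:]"] assms(3) assms(1) by (simp add: qf_def M_def)
  have polyq: "poly qf y = (\<Sum>k\<le>M. a k * y ^ k)" for y
    using poly_sum_N[of qf "Suc M" y] degq by (simp add: a_def lessThan_Suc_atMost)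
  have Vq: "(\<Sum>k\<le>M. vand Mm Mp r k * a k) = F r" if "r \<le> M" for r
  proof -
    have "(\<Sum>k\<le>M. vand Mm Mp r k * a k) = poly qf (real_of_int (int r - Mm))"
      unfolding polyq by (simp add: vand_def mult.commute)
    also have "\<dots> = poly pf (grid x1 dx (i + (int r - Mm)))" by (simp add: q1 grid)
    also have "\<dots> = F r" unfolding F_def
      by (rule assms(4)) (use that assms(2) in \<open>auto simp: M_def\<close>)
    finally show ?thesis .
  qed
  have aj: "(\<Sum>r\<le>M. W j r * F r) = a j" if "j \<le> M" for j
  proof -
    have "(\<Sum>r\<le>M. W j r * F r) = (\<Sum>r\<le>M. W j r * (\<Sum>k\<le>M. vand Mm Mp r k * a k))"
      using Vq by simp
    also have "\<dots> = (\<Sum>k\<le>M. (\<Sum>r\<le>M. W j r * vand Mm Mp r k) * a k)"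
      unfolding sum_distrib_left sum_distrib_right mult.assoc by (rule sum.swap)
    also have "\<dots> = (\<Sum>k\<le>M. if j = k then a k else 0)"
      using vand_inv_left[of j Mm Mp] that unfolding W_def M_def by (intro sum.cong refl) auto
    also have "\<dots> = a j" using that by simp
    finally show ?thesis .
  qed
  have coefA: "(\<Sum>l = -Mm..Mp. W j (nat (l + Mm)) * f (grid x1 dx (i + l))) = a j" if "j \<le> M" for j
    unfolding reidx[OF assms(2)] using aj[OF that] by (simp add: F_def M_def)
  show "poly ph (grid x1 dx i + \<xi> * dx)
              = (\<Sum>l = -Mm..Mp. alpha_h Mm Mp l \<xi> * f (grid x1 dx (i + l)))
          \<and> poly pf (grid x1 dx i + \<xi> * dx)
              = (\<Sum>l = -Mm..Mp. alpha_f Mm Mp l \<xi> * f (grid x1 dx (i + l)))"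
  proof
    show "poly ph (grid x1 dx i + \<xi> * dx)
              = (\<Sum>l = -Mm..Mp. alpha_h Mm Mp l \<xi> * f (grid x1 dx (i + l)))"
    proof -
      define K where "K = M + 2"
      obtain P where P: "pderiv P = ph" "degree P \<le> degree ph + 1" using antideriv by blast
      have dP: "degree P < 2 * K" and dph: "degree ph < 2 * K"
        using P(2) assms(5) by (simp_all add: K_def M_def)
      have "poly pf x = poly (\<Sum>j<K. smult (bb j * dx ^ (2*j)) ((pderiv ^^ (2*j)) ph)) x" for x
      proof -
        have "poly pf x = (1/dx) * (poly P (x + dx/2) - poly P (x - dx/2))"
          using assms(6)[of x] ftc_poly[OF P(1), of "x - dx/2" "x + dx/2"] assms(1) by simp
        also have "\<dots> = (\<Sum>j<K. bb j * dx ^ (2*j) * poly ((pderiv ^^ (2*j)) ph) x)"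
          by (rule average[OF assms(1) P(1) dP])
        finally show ?thesis by (simp add: poly_sum)
      qed
      then have pfeq: "pf = (\<Sum>j<K. smult (bb j * dx ^ (2*j)) ((pderiv ^^ (2*j)) ph))"
        by (simp add: poly_eq_poly_eq_iff[symmetric] fun_eq_iff)
      have X: "dx ^ n * poly ((pderiv ^^ n) pf) (c0 + \<xi> * dx) = poly ((pderiv ^^ n) qf) \<xi>" for n
        unfolding qf_def rescale by (simp add: poly_pcompose)
      have Dq: "poly ((pderiv ^^ n) qf) \<xi> = (\<Sum>m\<le>M. fact (m + n) / fact m * a (m + n) * \<xi> ^ m)" for n
      proof -
        have "degree ((pderiv ^^ n) qf) < Suc M" using degq by (simp add: degree_higher_pderiv)
        then have "poly ((pderiv ^^ n) qf) \<xi> = (\<Sum>m<Suc M. coeff ((pderiv ^^ n) qf) m * \<xi> ^ m)"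
          by (rule poly_sum_N)
        also have "\<dots> = (\<Sum>m\<le>M. fact (m + n) / fact m * a (m + n) * \<xi> ^ m)"
          unfolding lessThan_Suc_atMost coeff_higher_pderiv a_def
          by (intro sum.cong refl) (simp add: fact_poch)
        finally show ?thesis .
      qed
      have "poly ph (c0 + \<xi> * dx) = (\<Sum>k<K. tau k * (dx ^ (2*k) * poly ((pderiv ^^ (2*k)) pf) (c0 + \<xi> * dx)))"
        using inversion[OF pfeq dph] by (simp add: mult.assoc)
      also have "\<dots> = (\<Sum>k<K. \<Sum>m\<le>M. tau k * fact (m + 2*k) / fact m * \<xi> ^ m * a (m + 2*k))"
        unfolding X Dq by (simp add: sum_distrib_left algebra_simps)
      also have "\<dots> = (\<Sum>m\<le>M. \<Sum>k<K. tau k * fact (m + 2*k) / fact m * \<xi> ^ m * a (m + 2*k))"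
        by (rule sum.swap)
      also have "\<dots> = (\<Sum>m\<le>M. \<Sum>k\<le>(M - m) div 2. tau k * fact (m + 2*k) / fact m * \<xi> ^ m * a (m + 2*k))"
      proof (rule sum.cong[OF refl])
        fix m assume "m \<in> {..M}"
        show "(\<Sum>k<K. tau k * fact (m + 2*k) / fact m * \<xi> ^ m * a (m + 2*k))
            = (\<Sum>k\<le>(M - m) div 2. tau k * fact (m + 2*k) / fact m * \<xi> ^ m * a (m + 2*k))"
        proof (rule sum.mono_neutral_right)
          show "finite {..<K}" by simp
          show "{..(M - m) div 2} \<subseteq> {..<K}" by (auto simp: K_def)
          show "\<forall>k\<in>{..<K} - {..(M - m) div 2}. tau k * fact (m + 2*k) / fact m * \<xi> ^ m * a (m + 2*k) = 0"
            using degq by (auto simp: a_def intro!: coeff_eq_0)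
        qed
      qed
      also have "\<dots> = (\<Sum>m\<le>M. \<Sum>k\<le>(M - m) div 2. tau k * fact (m + 2*k) / fact m * \<xi> ^ m *
              (\<Sum>l = -Mm..Mp. W (m + 2*k) (nat (l + Mm)) * f (grid x1 dx (i + l))))"
        by (intro sum.cong refl) (simp add: coefA)
      also have "\<dots> = (\<Sum>l = -Mm..Mp. alpha_h Mm Mp l \<xi> * f (grid x1 dx (i + l)))"
        unfolding alpha_h_def W_def M_def sum_distrib_left sum_distrib_right
        apply (subst sum.swap)
        apply (rule trans[OF _ sum.swap])
        apply (rule sum.cong[OF refl])+
        apply (simp add: algebra_simps)
        done
      finally show ?thesis by (simp add: c0_def)
    qed
  next
    have "(\<Sum>l = -Mm..Mp. alpha_f Mm Mp l \<xi> * f (grid x1 dx (i + l)))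
        = (\<Sum>m\<le>M. \<xi> ^ m * (\<Sum>l = -Mm..Mp. W m (nat (l + Mm)) * f (grid x1 dx (i + l))))"
      unfolding alpha_f_def W_def M_def sum_distrib_left sum_distrib_right
      by (subst sum.swap) (simp add: algebra_simps)
    also have "\<dots> = (\<Sum>m\<le>M. a m * \<xi> ^ m)" by (simp add: coefA mult.commute)
    also have "\<dots> = poly pf (grid x1 dx i + \<xi> * dx)" by (simp add: polyq[symmetric] q1 c0_def)
    finally show "poly pf (grid x1 dx i + \<xi> * dx)
              = (\<Sum>l = -Mm..Mp. alpha_f Mm Mp l \<xi> * f (grid x1 dx (i + l)))" ..
  qed
qed

end
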